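(* Let $f_A, f_R$ and $F$ be as in the context, with $\chi = 1$ (so that $F(d,T) = (f_A+f_R)(|d|)\,d$). For $R>0$, the ring state $\delta_{(R,0)}$ (the uniform probability measure on the circle of radius $R$ centred at the origin) is a nontrivial equilibrium state of the mean-field equation $\partial_t\rho + \nabla\cdot[\rho\,(F(\cdot,T)\ast\rho)] = 0$ if and only if $$\int_0^{\pi} (f_A+f_R)\Big(R\sqrt{(1-\cos\phi)^2+\sin^2\phi}\Big)\,(1-\cos\phi)\,d\phi = 0 .$$
   Context: Let $f_R, f_A:[0,\infty)\to\mathbb{R}$ be smooth integrable functions with $f_R\ge 0$ and $f_A\le 0$, such that there is $d_a>0$ with $(f_A+f_R)(\rho)\le 0$ for $\rho>d_a$ and $(f_A+f_R)(\rho)>0$ for $0\le\rho<d_a$. For $\chi\in[0,1]$, $s=(0,1)$, $l=(1,0)$, let $T=\chi\, s\otimes s + l\otimes l$ and define the interaction force $F(d,T) = f_A(|d|)\,T d + f_R(|d|)\,d$ for $d\in\mathbb{R}^2$; assume $F$ is $C^1$ with bounded total derivatives in both arguments. Assume moreover there is $d_e>d_a$ such that $\chi f_A+f_R$ is strictly decreasing on $[0,d_e]$ for all $\chi\in[0,1]$. A Borel probability measure $\mu$ on $\mathbb{R}^2$ is an equilibrium state of the mean-field equation if $K(x):=(F(\cdot,T)\ast\mu)(x)=\int_{\mathbb{R}^2}F(x-y,T)\,d\mu(y)$ satisfies $K\in L^1_{loc}(d\mu)$ and $K=0$ on $\mathrm{supp}(\mu)$ $\mu$-a.e. For $R>0$,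 $r\ge 0$, the ellipse state $\delta_{(R,r)}$ is the probability measure uniformly distributed on $\{(R\cos\phi,(R+r)\sin\phi):\phi\in[0,2\pi)\}$; $\delta_{(R,0)}$ is the ring state of radius $R$. *)

theory Defs
  imports "HOL-Analysis.Analysis" "HOL-Probability.Probability"
begin

definition smooth_on_real :: "real set \<Rightarrow> (real \<Rightarrow> real) \<Rightarrow> bool" where
  "smooth_on_real S f \<longleftrightarrow>
     (\<exists>D :: nat \<Rightarrow> real \<Rightarrow> real. D 0 = f \<and>
        (\<forall>n. \<forall>x\<in>S. (D n has_real_derivative D (Suc n) x) (at x within S)))"

definition vec_s :: "real^2" where "vec_s = vector [0, 1]"
definition vec_l :: "real^2" where "vec_l = vector [1, 0]"

definition outer :: "real^2 \<Rightarrow> real^2 \<Rightarrow> real^2^2" where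
  "outer a b = (\<chi> i j. a $ i * b $ j)"

definition Tmat :: "real \<Rightarrow> real^2^2" where
  "Tmat chi = chi *\<^sub>R outer vec_s vec_s + outer vec_l vec_l"

definition Fforce :: "(real \<Rightarrow> real) \<Rightarrow> (real \<Rightarrow> real) \<Rightarrow> real^2^2 \<Rightarrow> real^2 \<Rightarrow> real^2" where
  "Fforce fA fR T d = fA (norm d) *\<^sub>R (T *v d) + fR (norm d) *\<^sub>R d"

definition msupport :: "(real^2) measure \<Rightarrow> (real^2) set" where
  "msupport \<mu> = {x. \<forall>e>0. emeasure \<mu> (ball x e) > 0}"

definition Kfield :: "(real \<Rightarrow> real) \<Rightarrow> (real \<Rightarrow> real) \<Rightarrow> real^2^2 \<Rightarrow> (real^2) measure \<Rightarrow> real^2 \<Rightarrow> real^2" where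
  "Kfield fA fR T \<mu> x = (\<integral>y. Fforce fA fR T (x - y) \<partial>\<mu>)"

definition equilibrium_state :: "(real \<Rightarrow> real) \<Rightarrow> (real \<Rightarrow> real) \<Rightarrow> real^2^2 \<Rightarrow> (real^2) measure \<Rightarrow> bool" where
  "equilibrium_state fA fR T \<mu> \<longleftrightarrow>
     prob_space \<mu> \<and> sets \<mu> = sets borel \<and>
     (AE x in \<mu>. integrable \<mu> (\<lambda>y. Fforce fA fR T (x - y))) \<and>
     (\<forall>C. compact C \<longrightarrow> set_integrable \<mu> C (Kfield fA fR T \<mu>)) \<and>
     (AE x in \<mu>. x \<in> msupport \<mu> \<longrightarrow> Kfield fA fR T \<mu> x = 0)"

definition nontrivial_state :: "(real^2) measure \<Rightarrow> bool" where
  "nontrivial_state \<mu> \<longleftrightarrow> \<not> (\<exists>p. \<mu> = return borel p)"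

definition ellipse_state :: "real \<Rightarrow> real \<Rightarrow> (real^2) measure" where
  "ellipse_state R r = distr (uniform_measure lborel {0..<2*pi}) borel
      (\<lambda>\<phi>. vector [R * cos \<phi>, (R + r) * sin \<phi>])"

end

theory Submission imports Defs begin

lemma per_shift:
  fixes f :: "real \<Rightarrow> real"
  assumes cont: "continuous_on UNIV f" and per: "\<And>x. f (x + 2*pi) = f x"
    and th: "0 \<le> \<theta>" "\<theta> \<le> 2*pi"
  shows "integral {0..2*pi} (\<lambda>x. f (x - \<theta>)) = integral {0..2*pi} f"
proof -
  have int: "\<And>a b. f integrable_on {a..b}"
    by (rule integrable_continuous_interval) (rule continuous_on_subset[OF cont], simp)
  have "integral {0..2*pi} (\<lambda>x. f (x - \<theta>)) = integral {0-\<theta>..2*pi-\<theta>} f"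
    using integral_shift_real_ivl[of "0 - \<theta>" "-\<theta>" "2*pi - \<theta>" f] by simp
  also have "\<dots> = integral {-\<theta>..0} f + integral {0..2*pi-\<theta>} f"
    using Henstock_Kurzweil_Integration.integral_combine[of "-\<theta>" 0 "2*pi-\<theta>" f] th int by simp
  also have "integral {-\<theta>..0} f = integral {2*pi-\<theta>..2*pi} f"
    using integral_shift_real_ivl[of "2*pi-\<theta>" "2*pi" "2*pi" f] per by simp
  also have "integral {2*pi-\<theta>..2*pi} f + integral {0..2*pi-\<theta>} f = integral {0..2*pi} f"
    using Henstock_Kurzweil_Integration.integral_combine[of 0 "2*pi-\<theta>" "2*pi" f] th int by simp
  finally show ?thesis .
qed

lemma per_sym:
  fixes f :: "real \<Rightarrow> real"
  assumes cont: "continuous_on UNIV f" and per: "\<And>x. f (x + 2*pi) = f x"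
    and sym: "\<And>x. f (-x) = s * f x"
  shows "integral {0..2*pi} f = (1 + s) * integral {0..pi} f"
proof -
  have int: "\<And>a b. f integrable_on {a..b}"
    by (rule integrable_continuous_interval) (rule continuous_on_subset[OF cont], simp)
  have "integral {0..2*pi} f = integral {0..pi} f + integral {pi..2*pi} f"
    using Henstock_Kurzweil_Integration.integral_combine[of 0 pi "2*pi" f] int by simp
  also have "integral {pi..2*pi} f = integral {-pi..0} f"
    using integral_shift_real_ivl[of pi "2*pi" "2*pi" f] per by simp
  also have "integral {-pi..0} f = integral {0..pi} (\<lambda>y. f (-y))"
    using Henstock_Kurzweil_Integration.integral_reflect_real[of pi 0 "\<lambda>y. f (-y)"] by simp
  also have "\<dots> = integral {0..pi} (\<lambda>y. s * f y)" by (simp add: sym)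
  also have "\<dots> = s * integral {0..pi} f" by simp
  finally show ?thesis by (simp add: algebra_simps)
qed


definition gam :: "real \<Rightarrow> real \<Rightarrow> real^2" where
  "gam R \<phi> = vector [R * cos \<phi>, R * sin \<phi>]"

lemma norm_r2: "norm (x::real^2) = sqrt (x$1^2 + x$2^2)"
  by (simp add: norm_vec_def L2_set_def sum_2)

lemma Tmat1: "Tmat 1 *v d = d"
  by (simp add: Tmat_def outer_def vec_s_def vec_l_def vec_eq_iff forall_2
      matrix_vector_mult_def sum_2)

lemma G_eq: "Fforce fA fR (Tmat 1) d = (fA (norm d) + fR (norm d)) *\<^sub>R d"
  by (simp add: Fforce_def Tmat1 algebra_simps)

lemma vec_diff: "gam R \<theta> - gam R \<phi> = R *\<^sub>R ((1 - cos (\<phi>-\<theta>)) *\<^sub>R vector[cos \<theta>, sin \<theta>]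
     + sin (\<phi>-\<theta>) *\<^sub>R vector[sin \<theta>, - cos \<theta>])"
proof -
  have a: "cos \<theta> - cos \<phi> = (1 - cos (\<phi>-\<theta>)) * cos \<theta> + sin (\<phi>-\<theta>) * sin \<theta>"
  proof -
    have "(1 - cos (\<phi>-\<theta>)) * cos \<theta> + sin (\<phi>-\<theta>) * sin \<theta> = cos \<theta> - cos \<phi> * ((sin \<theta>)^2 + (cos \<theta>)^2)"
      unfolding cos_diff sin_diff by algebra
    then show ?thesis by (simp only: sin_cos_squared_add mult_1_right)
  qed
  have b: "sin \<theta> - sin \<phi> = (1 - cos (\<phi>-\<theta>)) * sin \<theta> - sin (\<phi>-\<theta>) * cos \<theta>"
  proof -
    have "(1 - cos (\<phi>-\<theta>)) * sin \<theta> - sin (\<phi>-\<theta>) * cos \<theta> = sin \<theta> - sin \<phi> * ((sin \<theta>)^2 + (cos \<theta>)^2)"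
      unfolding cos_diff sin_diff by algebra
    then show ?thesis by (simp only: sin_cos_squared_add mult_1_right)
  qed
  show ?thesis
    using a b apply (simp add: gam_def vec_eq_iff forall_2 algebra_simps) by (metis distrib_left)
qed

lemma norm_gam_diff:
  assumes "R \<ge> 0"
  shows "norm (gam R \<theta> - gam R \<phi>) = R * sqrt ((1 - cos (\<phi>-\<theta>))^2 + (sin (\<phi>-\<theta>))^2)"
proof -
  have "(R * cos \<theta> - R * cos \<phi>)^2 + (R * sin \<theta> - R * sin \<phi>)^2
      = R^2 * ((1 - cos (\<phi>-\<theta>))^2 + (sin (\<phi>-\<theta>))^2)"
  proof -
    have "(1 - cos (\<phi>-\<theta>))^2 + (sin (\<phi>-\<theta>))^2 = 2 - 2 * cos (\<phi>-\<theta>)"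
    proof -
      have "(1 - cos (\<phi>-\<theta>))^2 + (sin (\<phi>-\<theta>))^2 = 1 - 2 * cos (\<phi>-\<theta>) + ((sin (\<phi>-\<theta>))^2 + (cos (\<phi>-\<theta>))^2)"
        by (simp add: power2_eq_square algebra_simps)
      then show ?thesis by simp
    qed
    moreover have "(R * cos \<theta> - R * cos \<phi>)^2 + (R * sin \<theta> - R * sin \<phi>)^2
        = R^2 * (((cos \<theta>)^2 + (sin \<theta>)^2) + ((cos \<phi>)^2 + (sin \<phi>)^2) - 2 * (cos \<phi> * cos \<theta> + sin \<phi> * sin \<theta>))"
      by algebra
    ultimately show ?thesis by (simp only: sin_cos_squared_add sin_cos_squared_add2 cos_diff) simp
  qed
  then show ?thesis using assms
    by (simp add: norm_r2 gam_def real_sqrt_mult)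
qed


definition UU :: "real measure" where "UU = uniform_measure lborel {0..<2*pi}"

lemma UU_density: "UU = density lborel (\<lambda>x. ennreal (indicator {0..<2*pi} x / (2*pi)))"
proof -
  have "\<And>x. (indicator {0..<2*pi} x :: ennreal) / emeasure lborel {0..<2*pi::real}
        = ennreal (indicator {0..<2*pi} x / (2*pi))"
    using divide_ennreal[of 1 "2*pi"] by (simp add: indicator_def)
  then show ?thesis unfolding UU_def uniform_measure_def by simp
qed

lemma UU_int:
  fixes f :: "real \<Rightarrow> real^2"
  assumes cont: "continuous_on UNIV f"
  shows "integrable UU f" "integral\<^sup>L UU f = (1/(2*pi)) *\<^sub>R integral {0..2*pi} f"
proof -
  have fm[measurable]: "f \<in> borel_measurable borel"
    using cont by (rule borel_measurable_continuous_onI)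
  have gm[measurable]: "(\<lambda>x::real. indicator {0..<2*pi} x / (2*pi)) \<in> borel_measurable lborel"
    by simp
  have ae: "AE x in lborel. (indicator {0..<2*pi} x / (2*pi)) *\<^sub>R f x
        = (1/(2*pi)) *\<^sub>R (indicator {0..2*pi} x *\<^sub>R f x)"
    using AE_lborel_singleton[of "2*pi"] by eventually_elim (auto simp: indicator_def)
  have ic: "integrable lborel (\<lambda>x. indicator {0..2*pi} x *\<^sub>R f x)"
    by (rule borel_integrable_compact) (auto intro: continuous_on_subset[OF cont])
  then have ic': "integrable lborel (\<lambda>x. (1/(2*pi)) *\<^sub>R (indicator {0..2*pi} x *\<^sub>R f x))"
    by (intro integrable_scaleR_right)
  have ic2: "integrable lborel (\<lambda>x. (indicator {0..<2*pi} x / (2*pi)) *\<^sub>R f x)"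
    using integrable_cong_AE[OF _ _ ae] ic' by simp
  show "integrable UU f"
    unfolding UU_density using ic2 by (subst integrable_density) auto
  have "integral\<^sup>L UU f = integral\<^sup>L lborel (\<lambda>x. (indicator {0..<2*pi} x / (2*pi)) *\<^sub>R f x)"
    unfolding UU_density by (subst integral_density) auto
  also have "\<dots> = integral\<^sup>L lborel (\<lambda>x. (1/(2*pi)) *\<^sub>R (indicator {0..2*pi} x *\<^sub>R f x))"
    by (rule integral_cong_AE[OF _ _ ae]) auto
  also have "\<dots> = (1/(2*pi)) *\<^sub>R integral\<^sup>L lborel (\<lambda>x. indicator {0..2*pi} x *\<^sub>R f x)"
    by (rule integral_scaleR_right)
  also have "integral\<^sup>L lborel (\<lambda>x. indicator {0..2*pi} x *\<^sub>R f x) = integral {0..2*pi} f"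
    using set_borel_integral_eq_integral(2)[of "{0..2*pi}" f] ic
    unfolding set_integrable_def set_lebesgue_integral_def by simp
  finally show "integral\<^sup>L UU f = (1/(2*pi)) *\<^sub>R integral {0..2*pi} f" .
qed


lemma gam_alt: "gam R = (\<lambda>\<phi>. (R * cos \<phi>) *\<^sub>R axis 1 1 + (R * sin \<phi>) *\<^sub>R axis 2 (1::real))"
  by (rule ext) (simp add: gam_def vec_eq_iff forall_2 axis_def)

lemma gam_cont: "continuous_on UNIV (gam R)"
  unfolding gam_alt by (intro continuous_intros)

definition hh :: "(real \<Rightarrow> real) \<Rightarrow> real \<Rightarrow> real \<Rightarrow> real" where
  "hh g R \<psi> = g (R * sqrt ((1 - cos \<psi>)^2 + (sin \<psi>)^2))"

lemma hh_cont:
  assumes gc: "continuous_on {0..} g" and R: "R \<ge> 0"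
  shows "continuous_on UNIV (hh g R)"
  unfolding hh_def
  by (rule continuous_on_compose2[OF gc]) (auto intro!: continuous_intros simp: R)

lemma hh_per: "hh g R (x + 2*pi) = hh g R x"
  by (simp add: hh_def)

lemma hh_even: "hh g R (-x) = hh g R x"
  by (simp add: hh_def)

lemma G_cont:
  assumes gc: "continuous_on {0..} g"
  shows "continuous_on UNIV (\<lambda>d::real^2. g (norm d) *\<^sub>R d)"
  by (intro continuous_intros continuous_on_compose2[OF gc]) auto

lemma K_circle:
  assumes gc: "continuous_on {0..} g" and R: "R > 0" and th: "0 \<le> \<theta>" "\<theta> \<le> 2*pi"
  shows "integral\<^sup>L UU (\<lambda>\<phi>. g (norm (gam R \<theta> - gam R \<phi>)) *\<^sub>R (gam R \<theta> - gam R \<phi>))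
     = (R * integral {0..pi} (\<lambda>\<psi>. hh g R \<psi> * (1 - cos \<psi>)) / pi) *\<^sub>R vector [cos \<theta>, sin \<theta>]"
proof -
  let ?u = "vector [cos \<theta>, sin \<theta>] :: real^2"
  let ?w = "vector [sin \<theta>, - cos \<theta>] :: real^2"
  define p where "p \<psi> = hh g R \<psi> * (1 - cos \<psi>)" for \<psi>
  define q where "q \<psi> = hh g R \<psi> * sin \<psi>" for \<psi>
  have hc: "continuous_on UNIV (hh g R)" using hh_cont[OF gc] R by simp
  have pc: "continuous_on UNIV p" unfolding p_def by (intro continuous_intros hc)
  have qc: "continuous_on UNIV q" unfolding q_def by (intro continuous_intros hc)
  have pI: "integral {0..2*pi} p = 2 * integral {0..pi} p"
    using per_sym[OF pc, of 1] by (simp add: p_def hh_per hh_even)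
  have qI: "integral {0..2*pi} q = 0"
    using per_sym[OF qc, of "-1"] by (simp add: q_def hh_per hh_even)
  have eq: "g (norm (gam R \<theta> - gam R \<phi>)) *\<^sub>R (gam R \<theta> - gam R \<phi>)
      = R *\<^sub>R (p (\<phi> - \<theta>) *\<^sub>R ?u + q (\<phi> - \<theta>) *\<^sub>R ?w)" for \<phi>
  proof -
    have n: "norm (gam R \<theta> - gam R \<phi>) = R * sqrt ((1 - cos (\<phi>-\<theta>))^2 + (sin (\<phi>-\<theta>))^2)"
      using R by (simp add: norm_gam_diff)
    have "g (norm (gam R \<theta> - gam R \<phi>)) *\<^sub>R (gam R \<theta> - gam R \<phi>)
       = hh g R (\<phi>-\<theta>) *\<^sub>R (R *\<^sub>R ((1 - cos (\<phi>-\<theta>)) *\<^sub>R ?u + sin (\<phi>-\<theta>) *\<^sub>R ?w))"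
      unfolding n hh_def by (subst vec_diff) (rule refl)
    then show ?thesis by (simp add: p_def q_def algebra_simps)
  qed
  have cont: "continuous_on UNIV (\<lambda>\<phi>. g (norm (gam R \<theta> - gam R \<phi>)) *\<^sub>R (gam R \<theta> - gam R \<phi>))"
    using continuous_on_compose2[OF G_cont[OF gc], of UNIV "\<lambda>\<phi>. gam R \<theta> - gam R \<phi>"]
      continuous_on_diff[OF continuous_on_const gam_cont, of "gam R \<theta>" R]
    by auto
  have ps: "continuous_on UNIV (\<lambda>\<phi>. p (\<phi> - \<theta>))"
    by (rule continuous_on_compose2[OF pc]) (auto intro!: continuous_intros)
  have qs: "continuous_on UNIV (\<lambda>\<phi>. q (\<phi> - \<theta>))"
    by (rule continuous_on_compose2[OF qc]) (auto intro!: continuous_intros)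
  have per_p: "\<And>x. p (x + 2*pi) = p x" by (simp add: p_def hh_per)
  have per_q: "\<And>x. q (x + 2*pi) = q x" by (simp add: q_def hh_per)
  have hp0: "((\<lambda>\<phi>. p (\<phi> - \<theta>)) has_integral integral {0..2*pi} (\<lambda>\<phi>. p (\<phi> - \<theta>))) {0..2*pi}"
    by (rule integrable_integral[OF integrable_continuous_interval[OF continuous_on_subset[OF ps subset_UNIV]]])
  have hq0: "((\<lambda>\<phi>. q (\<phi> - \<theta>)) has_integral integral {0..2*pi} (\<lambda>\<phi>. q (\<phi> - \<theta>))) {0..2*pi}"
    by (rule integrable_integral[OF integrable_continuous_interval[OF continuous_on_subset[OF qs subset_UNIV]]])
  have hp: "((\<lambda>\<phi>. p (\<phi> - \<theta>)) has_integral (2 * integral {0..pi} p)) {0..2*pi}"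
    using hp0 unfolding per_shift[OF pc per_p th] pI .
  have hq: "((\<lambda>\<phi>. q (\<phi> - \<theta>)) has_integral 0) {0..2*pi}"
    using hq0 unfolding per_shift[OF qc per_q th] qI .
  have "((\<lambda>\<phi>. R *\<^sub>R (p (\<phi> - \<theta>) *\<^sub>R ?u + q (\<phi> - \<theta>) *\<^sub>R ?w)) has_integral
        R *\<^sub>R ((2 * integral {0..pi} p) *\<^sub>R ?u + 0 *\<^sub>R ?w)) {0..2*pi}"
    by (intro has_integral_cmul has_integral_add has_integral_scaleR_left hp hq)
  then have H: "integral {0..2*pi} (\<lambda>\<phi>. R *\<^sub>R (p (\<phi> - \<theta>) *\<^sub>R ?u + q (\<phi> - \<theta>) *\<^sub>R ?w))
      = R *\<^sub>R ((2 * integral {0..pi} p) *\<^sub>R ?u + 0 *\<^sub>R ?w)"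
    by (rule integral_unique)
  have "integral {0..2*pi} (\<lambda>\<phi>. g (norm (gam R \<theta> - gam R \<phi>)) *\<^sub>R (gam R \<theta> - gam R \<phi>))
      = R *\<^sub>R ((2 * integral {0..pi} p) *\<^sub>R ?u)"
    unfolding eq H by simp
  then show ?thesis
    by (simp add: UU_int(2)[OF cont] p_def[abs_def])
qed


lemma smooth_cont: "smooth_on_real S f \<Longrightarrow> continuous_on S f"
  unfolding smooth_on_real_def continuous_on_eq_continuous_within
  by (metis DERIV_continuous)

lemma return_supp:
  assumes "x \<in> msupport (return borel p)"
  shows "x = (p::real^2)"
proof (rule ccontr)
  assume "x \<noteq> p"
  then have "dist x p > 0" by simp
  with assms have "emeasure (return borel p) (ball x (dist x p)) > 0"
    unfolding msupport_def by blast
  then show False by simp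
qed

theorem lemma3p4:
  fixes fA fR :: "real \<Rightarrow> real" and d_a d_e R :: real
    and F' :: "(real^2) \<times> real \<Rightarrow> (((real^2) \<times> real) \<Rightarrow>\<^sub>L (real^2))"
  assumes smoothA: "smooth_on_real {0..} fA" and smoothR: "smooth_on_real {0..} fR"
    and intA: "set_integrable lborel {0..} fA" and intR: "set_integrable lborel {0..} fR"
    and fR_nonneg: "\<And>\<rho>. \<rho> \<ge> 0 \<Longrightarrow> fR \<rho> \<ge> 0"
    and fA_nonpos: "\<And>\<rho>. \<rho> \<ge> 0 \<Longrightarrow> fA \<rho> \<le> 0"
    and da_pos: "d_a > 0"
    and sum_neg: "\<And>\<rho>. \<rho> > d_a \<Longrightarrow> fA \<rho> + fR \<rho> \<le> 0"
    and sum_pos: "\<And>\<rho>. 0 \<le> \<rho> \<Longrightarrow> \<rho> < d_a \<Longrightarrow> fA \<rho> + fR \<rho> > 0"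
    and F_deriv: "\<And>p. p \<in> UNIV \<times> {0..1} \<Longrightarrow>
        ((\<lambda>q. Fforce fA fR (Tmat (snd q)) (fst q)) has_derivative blinfun_apply (F' p))
          (at p within UNIV \<times> {0..1})"
    and F_deriv_cont: "continuous_on (UNIV \<times> {0..1}) F'"
    and F_deriv_bdd: "\<exists>B. \<forall>p\<in>UNIV \<times> {0..1}. norm (F' p) \<le> B"
    and de: "d_e > d_a"
    and decr: "\<And>chi. chi \<in> {0..1} \<Longrightarrow> strict_antimono_on {0..d_e} (\<lambda>\<rho>. chi * fA \<rho> + fR \<rho>)"
    and R_pos: "R > 0"
  shows "(equilibrium_state fA fR (Tmat 1) (ellipse_state R 0) \<and> nontrivial_state (ellipse_state R 0))
     \<longleftrightarrow> integral {0..pi} (\<lambda>\<phi>. (fA (R * sqrt ((1 - cos \<phi>)^2 + (sin \<phi>)^2)) + fR (R * sqrt ((1 - cos \<phi>)^2 + (sin \<phi>)^2))) * (1 - cos \<phi>)) = 0"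
proof -
  define g where "g \<rho> = fA \<rho> + fR \<rho>" for \<rho>
  have gc: "continuous_on {0..} g"
    unfolding g_def using smooth_cont[OF smoothA] smooth_cont[OF smoothR]
    by (intro continuous_intros)
  define \<mu> where "\<mu> = ellipse_state R 0"
  have \<mu>_eq: "\<mu> = distr UU borel (gam R)"
    unfolding \<mu>_def ellipse_state_def UU_def gam_def by simp
  define G where "G = Fforce fA fR (Tmat 1)"
  have G_eq': "G d = g (norm d) *\<^sub>R d" for d
    unfolding G_def g_def by (simp add: G_eq)
  have Gfun: "G = (\<lambda>d. g (norm d) *\<^sub>R d)" using G_eq' by (rule ext)
  have Gc: "continuous_on UNIV G"
    unfolding Gfun by (rule G_cont[OF gc])
  have sUU: "sets UU = sets borel" by (simp add: UU_def)
  have gm[measurable]: "gam R \<in> measurable UU borel"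
    using borel_measurable_continuous_onI[OF gam_cont, of R]
      measurable_cong_sets[OF sUU refl, of borel] by metis
  have Gm[measurable]: "G \<in> borel_measurable borel"
    using Gc by (rule borel_measurable_continuous_onI)
  have sets_\<mu>: "sets \<mu> = sets borel" by (simp add: \<mu>_eq)
  have probU: "prob_space UU" unfolding UU_def
    by (rule prob_space_uniform_measure) simp_all
  have prob\<mu>: "prob_space \<mu>" unfolding \<mu>_eq
    by (rule prob_space.prob_space_distr[OF probU gm])
  have contx: "continuous_on UNIV (\<lambda>\<phi>. G (x - gam R \<phi>))" for x
    using continuous_on_compose2[OF Gc, of UNIV "\<lambda>\<phi>. x - gam R \<phi>"]
      continuous_on_diff[OF continuous_on_const gam_cont, of x R] by auto
  have int\<mu>: "integrable \<mu> (\<lambda>y. G (x - y))" for x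
    unfolding \<mu>_eq using UU_int(1)[OF contx] by (subst integrable_distr_eq[OF gm]) auto
  define K where "K = Kfield fA fR (Tmat 1) \<mu>"
  have K\<mu>: "K x = integral\<^sup>L UU (\<lambda>\<phi>. G (x - gam R \<phi>))" for x
    unfolding K_def Kfield_def G_def[symmetric] \<mu>_eq by (rule integral_distr[OF gm]) measurable
  define I where "I = integral {0..pi} (\<lambda>\<psi>. hh g R \<psi> * (1 - cos \<psi>))"
  have KC: "K (gam R \<theta>) = (R * I / pi) *\<^sub>R vector [cos \<theta>, sin \<theta>]"
    if "0 \<le> \<theta>" "\<theta> \<le> 2*pi" for \<theta>
    using K_circle[OF gc R_pos that] unfolding K\<mu> G_eq' I_def .
  have Km[measurable]: "K \<in> borel_measurable borel"
  proof -
    interpret sigma_finite_measure \<mu> using prob\<mu> by (simp add: prob_space_imp_sigma_finite)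
    have "(\<lambda>(x,y). G (x - y)) \<in> borel_measurable (borel \<Otimes>\<^sub>M borel)"
      by measurable
    then have "(\<lambda>(x,y). G (x - y)) \<in> borel_measurable (borel \<Otimes>\<^sub>M \<mu>)"
      using measurable_cong_sets[OF sets_pair_measure_cong[OF refl sets_\<mu>] refl, of borel borel] by metis
    then show ?thesis
      unfolding K_def Kfield_def G_def[symmetric] by (rule borel_measurable_lebesgue_integral)
  qed
  have I_eq: "integral {0..pi} (\<lambda>\<phi>. (fA (R * sqrt ((1 - cos \<phi>)^2 + (sin \<phi>)^2)) + fR (R * sqrt ((1 - cos \<phi>)^2 + (sin \<phi>)^2))) * (1 - cos \<phi>)) = I"
    unfolding I_def hh_def g_def ..
  have supp: "gam R \<phi>0 \<in> msupport \<mu>" if ph: "0 \<le> \<phi>0" "\<phi>0 < 2*pi" for \<phi>0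
    unfolding msupport_def
  proof (safe)
    fix e :: real assume e: "e > 0"
    obtain \<delta> where \<delta>: "\<delta> > 0" "\<And>\<phi>. dist \<phi> \<phi>0 < \<delta> \<Longrightarrow> dist (gam R \<phi>) (gam R \<phi>0) < e"
      using continuous_on_iff[THEN iffD1, OF gam_cont[of R]] e by (metis UNIV_I)
    define b where "b = min (\<phi>0 + \<delta>) (2*pi)"
    have b: "\<phi>0 < b" using \<delta> ph by (simp add: b_def)
    have sub: "{\<phi>0..<b} \<subseteq> {0..<2*pi} \<inter> (gam R -` ball (gam R \<phi>0) e)"
    proof
      fix \<phi> assume "\<phi> \<in> {\<phi>0..<b}"
      then have "\<phi>0 \<le> \<phi>" "\<phi> < \<phi>0 + \<delta>" "\<phi> < 2*pi" by (auto simp: b_def)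
      then have "dist \<phi> \<phi>0 < \<delta>" by (simp add: dist_real_def)
      from \<delta>(2)[OF this] show "\<phi> \<in> {0..<2*pi} \<inter> (gam R -` ball (gam R \<phi>0) e)"
        using \<open>\<phi>0 \<le> \<phi>\<close> \<open>\<phi> < 2*pi\<close> ph by (simp add: dist_commute)
    qed
    have vs: "gam R -` ball (gam R \<phi>0) e \<in> sets lborel"
      using measurable_sets[OF gm, of "ball (gam R \<phi>0) e"] by (simp add: UU_def)
    have "emeasure \<mu> (ball (gam R \<phi>0) e) = emeasure UU (gam R -` ball (gam R \<phi>0) e)"
      unfolding \<mu>_eq by (subst emeasure_distr[OF gm]) (auto simp: UU_def)
    also have "\<dots> = emeasure lborel ({0..<2*pi} \<inter> (gam R -` ball (gam R \<phi>0) e)) / emeasure lborel {0..<2*pi::real}"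
      unfolding UU_def using vs by (subst emeasure_uniform_measure) auto
    finally have eq: "emeasure \<mu> (ball (gam R \<phi>0) e) = emeasure lborel ({0..<2*pi} \<inter> (gam R -` ball (gam R \<phi>0) e)) / ennreal (2*pi)"
      by simp
    have "0 < emeasure lborel {\<phi>0..<b}" using b by simp
    also have "\<dots> \<le> emeasure lborel ({0..<2*pi} \<inter> (gam R -` ball (gam R \<phi>0) e))"
      by (rule emeasure_mono[OF sub]) (use vs in auto)
    finally have pos: "0 < emeasure lborel ({0..<2*pi} \<inter> (gam R -` ball (gam R \<phi>0) e))" .
    show "0 < emeasure \<mu> (ball (gam R \<phi>0) e)"
      unfolding eq using pos by (simp add: ennreal_zero_less_divide)
  qed
  have u_nz: "vector [cos \<theta>, sin \<theta>] \<noteq> (0::real^2)" for \<theta>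
  proof
    assume "vector [cos \<theta>, sin \<theta>] = (0::real^2)"
    then have "cos \<theta> = 0" "sin \<theta> = 0" by (auto simp: vec_eq_iff forall_2)
    then show False using sin_cos_squared_add[of \<theta>] by simp
  qed
  show ?thesis
  proof
    assume L: "equilibrium_state fA fR (Tmat 1) (ellipse_state R 0) \<and> nontrivial_state (ellipse_state R 0)"
    define P where "P x \<longleftrightarrow> (x \<in> msupport \<mu> \<longrightarrow> K x = 0)" for x
    have ae: "AE x in \<mu>. P x"
      using L unfolding equilibrium_state_def P_def K_def \<mu>_def by simp
    then have "AE x in distr UU borel (gam R). P x" by (simp only: \<mu>_eq)
    then have ae2: "AE \<phi> in UU. P (gam R \<phi>)" by (rule AE_distrD[OF gm])
    have ae3: "AE \<phi> in UU. \<phi> \<in> {0..<2*pi}" unfolding UU_def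
      by (rule AE_uniform_measureI) auto
    have aeX: "AE \<phi> in UU. \<phi> \<in> {0..<2*pi} \<and> P (gam R \<phi>)"
      using ae2 ae3 by eventually_elim auto
    have "\<exists>\<phi>. \<phi> \<in> {0..<2*pi} \<and> P (gam R \<phi>)"
    proof (rule ccontr)
      assume nx: "\<not> ?thesis"
      from aeX have "AE \<phi> in UU. False" by eventually_elim (use nx in blast)
      then show False using prob_space.AE_False[OF probU] by simp
    qed
    then obtain \<phi> where \<phi>: "0 \<le> \<phi>" "\<phi> < 2*pi" "P (gam R \<phi>)" by auto
    then have "K (gam R \<phi>) = 0" using supp[OF \<phi>(1,2)] by (simp add: P_def)
    then have "(R * I / pi) *\<^sub>R vector [cos \<phi>, sin \<phi>] = (0::real^2)"
      using KC[of \<phi>] \<phi> by simp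
    then have "R * I / pi = 0" using u_nz by simp
    then have "I = 0" using R_pos by simp
    then show "integral {0..pi} (\<lambda>\<phi>. (fA (R * sqrt ((1 - cos \<phi>)^2 + (sin \<phi>)^2)) + fR (R * sqrt ((1 - cos \<phi>)^2 + (sin \<phi>)^2))) * (1 - cos \<phi>)) = 0"
      unfolding I_eq .
  next
    assume "integral {0..pi} (\<lambda>\<phi>. (fA (R * sqrt ((1 - cos \<phi>)^2 + (sin \<phi>)^2)) + fR (R * sqrt ((1 - cos \<phi>)^2 + (sin \<phi>)^2))) * (1 - cos \<phi>)) = 0"
    then have I0: "I = 0" unfolding I_eq .
    have aeK: "AE x in \<mu>. K x = 0"
    proof -
      have "AE \<phi> in UU. K (gam R \<phi>) = 0" unfolding UU_def
        by (rule AE_uniform_measureI) (auto simp: KC I0)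
      then have "AE x in distr UU borel (gam R). K x = 0"
        by (subst AE_distr_iff[OF gm]) (auto)
      then show ?thesis by (simp only: \<mu>_eq)
    qed
    have eq: "equilibrium_state fA fR (Tmat 1) \<mu>"
      unfolding equilibrium_state_def G_def[symmetric] K_def[symmetric]
    proof (intro conjI allI impI)
      show "prob_space \<mu>" by (rule prob\<mu>)
      show "sets \<mu> = sets borel" by (rule sets_\<mu>)
      show "AE x in \<mu>. integrable \<mu> (\<lambda>y. G (x - y))" using int\<mu> by simp
      fix C :: "(real^2) set" assume "compact C"
      then have [measurable]: "C \<in> sets borel" by (rule borel_compact)
      show "set_integrable \<mu> C K"
        unfolding set_integrable_def
      proof (rule finite_measure.integrable_const_bound[where B=0])
        show "finite_measure \<mu>" using prob\<mu> by (simp add: prob_space_def)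
        show "AE x in \<mu>. norm (indicator C x *\<^sub>R K x) \<le> 0"
          using aeK by eventually_elim simp
        show "(\<lambda>x. indicator C x *\<^sub>R K x) \<in> borel_measurable \<mu>"
          using sets_\<mu> by measurable
      qed
    next
      show "AE x in \<mu>. x \<in> msupport \<mu> \<longrightarrow> K x = 0" using aeK by eventually_elim simp
    qed
    have nt: "nontrivial_state \<mu>"
      unfolding nontrivial_state_def
    proof
      assume "\<exists>p. \<mu> = return borel p"
      then obtain p where p: "\<mu> = return borel p" by blast
      have "gam R 0 = p" using supp[of 0] p return_supp by auto
      moreover have "gam R pi = p" using supp[of pi] p return_supp by auto
      ultimately have "gam R 0 = gam R pi" by simp
      then have "R = - R" by (simp add: gam_def vec_eq_iff forall_2)
      then show False using R_pos by simp
    qed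
    show "equilibrium_state fA fR (Tmat 1) (ellipse_state R 0) \<and> nontrivial_state (ellipse_state R 0)"
      using eq nt unfolding \<mu>_def by simp
  qed
qed

end
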